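(* Let $K\subseteq\mathbb{R}^d$ be a compact connected set. Suppose that for every $x\in K$ there is $C_x>0$ such that for all $f\in C^1(K)$ and all $y\in K\setminus\{x\}$, $\frac{|f(y)-f(x)|}{|y-x|}\le C_x\|f\|_{C^1(K)}$. Then $K$ is pointwise Whitney regular.
   Context: $C^1(K)$ is the set of $f:K\to\mathbb{R}$ admitting a continuous $df:K\to\mathbb{R}^d$ with $\lim_{y\to x,\,y\in K\setminus\{x\}}\frac{f(y)-f(x)-\langle df(x),y-x\rangle}{|y-x|}=0$ for all $x\in K$, normed by $\|f\|_{C^1(K)}=\|f\|_K+\inf\{\|df\|_K: df \text{ a continuous derivative of } f\}$. $K$ is pointwise Whitney regular if for every $x\in K$ there are a neighbourhood $V_x$ of $x$ and $C_x>0$ such that every $y\in V_x\cap K$ is joined to $x$ by a rectifiable path in $K$ of length at most $C_x|x-y|$ (a rectifiable path is a continuous map $\gamma:[a,b]\to K$ of finite length $\sup\sum_j|\gamma(t_j)-\gamma(t_{j-1})|$). *)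

theory Defs
  imports "HOL-Analysis.Analysis"
begin

definition is_C1_deriv :: "'a::euclidean_space set \<Rightarrow> ('a \<Rightarrow> real) \<Rightarrow> ('a \<Rightarrow> 'a) \<Rightarrow> bool" where
  "is_C1_deriv K f df \<longleftrightarrow> continuous_on K df \<and>
     (\<forall>x\<in>K. ((\<lambda>y. (f y - f x - inner (df x) (y - x)) / norm (y - x)) \<longlongrightarrow> 0) (at x within K))"

definition C1 :: "'a::euclidean_space set \<Rightarrow> ('a \<Rightarrow> real) set" where
  "C1 K = {f. \<exists>df. is_C1_deriv K f df}"

definition C1_norm :: "'a::euclidean_space set \<Rightarrow> ('a \<Rightarrow> real) \<Rightarrow> real" where
  "C1_norm K f = (SUP x\<in>K. \<bar>f x\<bar>) + (INF df\<in>{df. is_C1_deriv K f df}. (SUP x\<in>K. norm (df x)))"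

definition chord_sums :: "(real \<Rightarrow> 'a::real_normed_vector) \<Rightarrow> real \<Rightarrow> real \<Rightarrow> real set" where
  "chord_sums g a b = {(\<Sum>j\<in>{1..n}. norm (g (t j) - g (t (j - 1)))) | t n.
      t 0 = a \<and> t n = b \<and> (\<forall>j<n. t j \<le> t (Suc j))}"

definition path_length :: "(real \<Rightarrow> 'a::real_normed_vector) \<Rightarrow> real \<Rightarrow> real \<Rightarrow> real" where
  "path_length g a b = Sup (chord_sums g a b)"

definition rectifiable_path_in :: "'a::real_normed_vector set \<Rightarrow> (real \<Rightarrow> 'a) \<Rightarrow> real \<Rightarrow> real \<Rightarrow> bool" where
  "rectifiable_path_in K g a b \<longleftrightarrow> a \<le> b \<and> continuous_on {a..b} g \<and> g ` {a..b} \<subseteq> K \<and>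
     bdd_above (chord_sums g a b)"

definition pointwise_whitney_regular :: "'a::euclidean_space set \<Rightarrow> bool" where
  "pointwise_whitney_regular K \<longleftrightarrow> (\<forall>x\<in>K. \<exists>V C. open V \<and> x \<in> V \<and> C > 0 \<and>
     (\<forall>y\<in>V \<inter> K. \<exists>g a b. rectifiable_path_in K g a b \<and> g a = x \<and> g b = y \<and>
        path_length g a b \<le> C * norm (x - y)))"

end

theory Submission imports Defs "HOL-Complex_Analysis.Great_Picard" begin

definition clamp1 :: "real \<Rightarrow> real" where "clamp1 t = max (-1) (min 1 t)"
definition bt :: "real \<Rightarrow> real" where "bt t = (1 + cos (pi * clamp1 t)) / 2"
definition bt' :: "real \<Rightarrow> real" where "bt' t = - (pi / 2) * sin (pi * clamp1 t)"

lemma bt_cont: "continuous_on UNIV bt"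
  unfolding bt_def clamp1_def by (intro continuous_intros) auto
lemma bt'_cont: "continuous_on UNIV bt'"
  unfolding bt'_def clamp1_def by (intro continuous_intros)

lemma bt_nonneg: "0 \<le> bt t"
proof -
  have "0 \<le> 1 + cos (pi * clamp1 t)" using cos_ge_minus_one[of "pi * clamp1 t"] by linarith
  then show ?thesis unfolding bt_def by simp
qed
lemma bt_le1: "bt t \<le> 1" unfolding bt_def by simp
lemma bt'_bound: "\<bar>bt' t\<bar> \<le> pi / 2"
proof -
  have "\<bar>sin (pi * clamp1 t)\<bar> \<le> 1" by (rule abs_sin_le_one)
  then have "pi / 2 * \<bar>sin (pi * clamp1 t)\<bar> \<le> pi / 2 * 1" by (intro mult_left_mono) auto
  then show ?thesis unfolding bt'_def by (simp add: abs_mult)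
qed

lemma bt_out: assumes "1 \<le> \<bar>t\<bar>" shows "bt t = 0" and "bt' t = 0"
proof -
  have "clamp1 t = 1 \<or> clamp1 t = -1" using assms unfolding clamp1_def by auto
  then show "bt t = 0" "bt' t = 0" unfolding bt_def bt'_def by auto
qed

lemma bt_in: assumes "\<bar>t\<bar> \<le> 1" shows "bt t = (1 + cos (pi * t)) / 2" and "bt' t = - (pi / 2) * sin (pi * t)"
proof -
  have "clamp1 t = t" using assms unfolding clamp1_def by auto
  then show "bt t = (1 + cos (pi * t)) / 2" "bt' t = - (pi / 2) * sin (pi * t)" unfolding bt_def bt'_def by auto
qed

lemma bt_deriv: "(bt has_real_derivative bt' t) (at t)"
proof -
  define S where "S = {t::real. \<bar>t\<bar> \<le> 1}"
  define T where "T = {t::real. \<not> \<bar>t\<bar> \<le> 1}"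
  define f where "f t = (1 + cos (pi * t)) / 2" for t
  define f' where "f' t = (\<lambda>h::real. - (pi / 2) * sin (pi * t) * h)" for t
  have fd: "(f has_derivative f' t) (at t)" for t
  proof -
    have "(f has_real_derivative - (pi / 2) * sin (pi * t)) (at t)"
      unfolding f_def by (auto intro!: derivative_eq_intros)
    then show ?thesis unfolding has_field_derivative_def f'_def by (simp add: mult.commute)
  qed
  have cS: "closed S" unfolding S_def by (intro closed_Collect_le continuous_intros)
  have cl1: "closed {t::real. 1 \<le> \<bar>t\<bar>}"
    by (intro closed_Collect_le continuous_intros)
  have cT: "closure T \<subseteq> {t. 1 \<le> \<bar>t\<bar>}"
    by (rule closure_minimal) (use cl1 in \<open>auto simp: T_def\<close>)
  have bd: "t \<in> closure S \<Longrightarrow> t \<in> closure T \<Longrightarrow> \<bar>t\<bar> = 1" for t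
    using cT closure_closed[OF cS] unfolding S_def by auto
  have pm: "\<bar>t\<bar> = 1 \<Longrightarrow> t = 1 \<or> t = -1" for t :: real by auto
  have main: "((\<lambda>x. if x \<in> S then f x else 0) has_derivative
      (if t \<in> S then f' t else (\<lambda>h. 0))) (at t within (S \<union> T))"
  proof (rule has_derivative_If_within_closures)
    show "(f has_derivative f' t) (at t within S \<union> (closure S \<inter> closure T))"
      using fd by (rule has_derivative_at_withinI)
    show "((\<lambda>x. 0) has_derivative (\<lambda>h. 0)) (at t within T \<union> (closure S \<inter> closure T))"
      by simp
    show "f t = 0" if "t \<in> closure S" "t \<in> closure T"
      using pm[OF bd[OF that]] by (auto simp: f_def)
    show "f' t = (\<lambda>h. 0)" if "t \<in> closure S" "t \<in> closure T"
      using pm[OF bd[OF that]] by (auto simp: f'_def)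
    show "t \<in> S \<union> T" by (auto simp: S_def T_def)
  qed
  have e1: "S \<union> T = UNIV" by (auto simp: S_def T_def)
  have e2: "(\<lambda>x. if x \<in> S then f x else 0) = bt"
    by (rule ext) (auto simp: S_def f_def bt_in bt_out)
  have e3: "(if t \<in> S then f' t else (\<lambda>h. 0)) = (\<lambda>h. bt' t * h)"
    by (rule ext) (auto simp: S_def f'_def bt_in bt_out)
  show ?thesis using main unfolding e1 e2 e3 has_field_derivative_def by simp
qed

lemma floor_split:
  fixes t :: real
  obtains m :: int where "real_of_int m \<le> t" "t < real_of_int m + 1"
    "\<And>k::int. k \<noteq> m \<Longrightarrow> k \<noteq> m + 1 \<Longrightarrow> 1 \<le> \<bar>t - real_of_int k\<bar>"
proof -
  have a: "real_of_int \<lfloor>t\<rfloor> \<le> t" by simp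
  have b: "t < real_of_int \<lfloor>t\<rfloor> + 1" by linarith
  have c: "1 \<le> \<bar>t - real_of_int k\<bar>" if "k \<noteq> \<lfloor>t\<rfloor>" "k \<noteq> \<lfloor>t\<rfloor> + 1" for k :: int
  proof -
    have "k \<le> \<lfloor>t\<rfloor> - 1 \<or> k \<ge> \<lfloor>t\<rfloor> + 2" using that by linarith
    then show ?thesis
    proof
      assume "k \<le> \<lfloor>t\<rfloor> - 1"
      then have "real_of_int k \<le> real_of_int \<lfloor>t\<rfloor> - 1" by linarith
      then show ?thesis using a by linarith
    next
      assume "k \<ge> \<lfloor>t\<rfloor> + 2"
      then have "real_of_int k \<ge> real_of_int \<lfloor>t\<rfloor> + 2" by linarith
      then show ?thesis using b by linarith
    qed
  qed
  show thesis by (rule that[OF a b c]) auto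
qed

lemma bt_sum_gen:
  fixes t :: real and N :: int and F :: "real \<Rightarrow> real"
  assumes "\<bar>t\<bar> \<le> real_of_int N - 1" and F0: "\<And>u. 1 \<le> \<bar>u\<bar> \<Longrightarrow> F u = 0"
  obtains m :: int where "(\<Sum>k\<in>{-N..N}. F (t - k)) = F (t - m) + F (t - m - 1)"
    "0 \<le> t - m" "t - m < 1"
proof -
  obtain m :: int where m: "real_of_int m \<le> t" "t < real_of_int m + 1"
    "\<And>k::int. k \<noteq> m \<Longrightarrow> k \<noteq> m + 1 \<Longrightarrow> 1 \<le> \<bar>t - real_of_int k\<bar>"
    by (rule floor_split[of t]) blast
  have mN: "m \<in> {-N..N}" "m + 1 \<in> {-N..N}" using m(1,2) assms(1) by auto
  have "(\<Sum>k\<in>{-N..N}. F (t - k)) = (\<Sum>k\<in>{m, m+1}. F (t - k))"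
    by (rule sum.mono_neutral_right) (use mN m(3) F0 in auto)
  also have "\<dots> = F (t - m) + F (t - m - 1)" by (simp add: algebra_simps)
  finally show ?thesis using that m(1,2) by simp
qed

lemma bt_sum: fixes N :: int and t :: real assumes "\<bar>t\<bar> \<le> real_of_int N - 1"
  shows "(\<Sum>k\<in>{-N..N}. bt (t - real_of_int k)) = 1"
proof -
  obtain m :: int where e: "(\<Sum>k\<in>{-N..N}. bt (t - k)) = bt (t - m) + bt (t - m - 1)"
    and s: "0 \<le> t - m" "t - m < 1"
    by (rule bt_sum_gen[of t N bt, OF assms bt_out(1)])
  define s where "s = t - m"
  have "bt s = (1 + cos (pi * s)) / 2" using s by (intro bt_in) (auto simp: s_def)
  moreover have "bt (s - 1) = (1 + cos (pi * (s - 1))) / 2" using s by (intro bt_in) (auto simp: s_def)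
  moreover have "cos (pi * (s - 1)) = - cos (pi * s)"
    by (simp add: right_diff_distrib cos_diff)
  ultimately have "bt s + bt (s - 1) = 1" by simp
  then show ?thesis using e by (simp add: s_def)
qed

lemma bt'_sum: fixes N :: int and t :: real assumes "\<bar>t\<bar> \<le> real_of_int N - 1"
  shows "(\<Sum>k\<in>{-N..N}. \<bar>bt' (t - real_of_int k)\<bar>) \<le> pi"
proof -
  have F0: "\<And>u. 1 \<le> \<bar>u\<bar> \<Longrightarrow> \<bar>bt' u\<bar> = 0" by (simp add: bt_out(2))
  obtain m :: int where e: "(\<Sum>k\<in>{-N..N}. \<bar>bt' (t - k)\<bar>) = \<bar>bt' (t - m)\<bar> + \<bar>bt' (t - m - 1)\<bar>"
    and "0 \<le> t - m" "t - m < 1"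
    by (rule bt_sum_gen[of t N "\<lambda>u. \<bar>bt' u\<bar>", OF assms F0])
  show ?thesis unfolding e using bt'_bound[of "t - m"] bt'_bound[of "t - m - 1"] by simp
qed


definition psi :: "real \<Rightarrow> ('a::euclidean_space \<Rightarrow> int) \<Rightarrow> 'a \<Rightarrow> real" where
  "psi r v z = (\<Prod>i\<in>Basis. bt (z \<bullet> i / r - of_int (v i)))"

definition dpsi :: "real \<Rightarrow> ('a::euclidean_space \<Rightarrow> int) \<Rightarrow> 'a \<Rightarrow> 'a" where
  "dpsi r v z = (\<Sum>i\<in>Basis. (bt' (z \<bullet> i / r - of_int (v i)) / r *
      (\<Prod>j\<in>Basis - {i}. bt (z \<bullet> j / r - of_int (v j)))) *\<^sub>R i)"

lemma bt_has_derivative: "(bt has_derivative (\<lambda>u. bt' t * u)) (at t)"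
  using bt_deriv[of t] unfolding has_field_derivative_def by simp

lemma coord_deriv:
  fixes i :: "'a::euclidean_space"
  shows "((\<lambda>z. bt (z \<bullet> i / r - c)) has_derivative (\<lambda>h. bt' (z \<bullet> i / r - c) * (h \<bullet> i / r))) (at z)"
proof -
  have bl: "bounded_linear (\<lambda>h::'a. h \<bullet> i / r)"
    using bounded_linear_compose[OF bounded_linear_divide[of r] bounded_linear_inner_left[of i]]
    by (simp add: o_def)
  have d0: "((\<lambda>z. z \<bullet> i / r) has_derivative (\<lambda>h. h \<bullet> i / r)) (at z)"
    by (rule bounded_linear_imp_has_derivative[OF bl])
  have d1: "((\<lambda>z. z \<bullet> i / r - c) has_derivative (\<lambda>h. h \<bullet> i / r)) (at z)"
    using has_derivative_diff[OF d0 has_derivative_const[of c]] by simp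
  show ?thesis using has_derivative_compose[OF d1 bt_has_derivative] by simp
qed

lemma psi_deriv: "(psi r v has_derivative (\<lambda>h. dpsi r v z \<bullet> h)) (at z)"
proof -
  have "((\<lambda>z. \<Prod>i\<in>Basis. bt (z \<bullet> i / r - of_int (v i))) has_derivative
     (\<lambda>h. \<Sum>i\<in>Basis. bt' (z \<bullet> i / r - of_int (v i)) * (h \<bullet> i / r) *
        (\<Prod>j\<in>Basis - {i}. bt (z \<bullet> j / r - of_int (v j))))) (at z)"
    by (rule has_derivative_prod) (rule coord_deriv)
  moreover have "(\<lambda>h. \<Sum>i\<in>Basis. bt' (z \<bullet> i / r - of_int (v i)) * (h \<bullet> i / r) *
        (\<Prod>j\<in>Basis - {i}. bt (z \<bullet> j / r - of_int (v j)))) = (\<lambda>h. dpsi r v z \<bullet> h)"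
  proof (rule ext)
    fix h :: 'a
    show "(\<Sum>i\<in>Basis. bt' (z \<bullet> i / r - of_int (v i)) * (h \<bullet> i / r) *
        (\<Prod>j\<in>Basis - {i}. bt (z \<bullet> j / r - of_int (v j)))) = dpsi r v z \<bullet> h"
      unfolding dpsi_def inner_sum_left
      by (rule sum.cong[OF refl]) (simp add: inner_commute[of h])
  qed
  ultimately show ?thesis unfolding psi_def[abs_def] by simp
qed

lemma psi_sum:
  fixes z :: "'a::euclidean_space" and N :: int
  assumes "\<And>i. i \<in> Basis \<Longrightarrow> \<bar>z \<bullet> i / r\<bar> \<le> real_of_int N - 1"
  shows "(\<Sum>v\<in>PiE Basis (\<lambda>_. {-N..N}). psi r v z) = 1"
proof -
  have "(\<Sum>v\<in>PiE Basis (\<lambda>_. {-N..N}). psi r v z) =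
      (\<Prod>i\<in>Basis. \<Sum>k\<in>{-N..N}. bt (z \<bullet> i / r - of_int k))"
    unfolding psi_def by (rule prod_sum_PiE[symmetric]) auto
  also have "\<dots> = (\<Prod>i\<in>(Basis::'a set). 1)"
    by (rule prod.cong) (auto intro: bt_sum assms)
  finally show ?thesis by simp
qed

lemma psi_active:
  fixes z :: "'a::euclidean_space"
  assumes "j \<in> Basis" "1 \<le> \<bar>z \<bullet> j / r - of_int (v j)\<bar>"
  shows "psi r v z = 0" "dpsi r v z = 0"
proof -
  have z1: "bt (z \<bullet> j / r - of_int (v j)) = 0" "bt' (z \<bullet> j / r - of_int (v j)) = 0"
    using bt_out[OF assms(2)] by auto
  show "psi r v z = 0" unfolding psi_def using assms(1) z1 by (intro prod_zero) auto
  have Z: "(bt' (z \<bullet> i / r - of_int (v i)) / r *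
      (\<Prod>j\<in>Basis - {i}. bt (z \<bullet> j / r - of_int (v j)))) = 0" if "i \<in> Basis" for i
  proof (cases "i = j")
    case True
    then show ?thesis using z1 by simp
  next
    case False
    have "(\<Prod>j\<in>Basis - {i}. bt (z \<bullet> j / r - of_int (v j))) = 0"
      using assms(1) False z1 by (intro prod_zero) auto
    then show ?thesis by simp
  qed
  show "dpsi r v z = 0" unfolding dpsi_def
  proof (rule sum.neutral, intro ballI)
    fix i :: 'a assume "i \<in> Basis"
    show "(bt' (z \<bullet> i / r - of_int (v i)) / r *
      (\<Prod>j\<in>Basis - {i}. bt (z \<bullet> j / r - of_int (v j)))) *\<^sub>R i = 0"
      unfolding Z[OF \<open>i \<in> Basis\<close>] by simp
  qed
qed

lemma dpsi_norm:
  fixes z :: "'a::euclidean_space"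
  assumes "r > 0"
  shows "norm (dpsi r v z) \<le> (\<Sum>i\<in>Basis. \<bar>bt' (z \<bullet> i / r - of_int (v i))\<bar> / r *
      (\<Prod>j\<in>Basis - {i}. bt (z \<bullet> j / r - of_int (v j))))"
proof -
  have "norm (dpsi r v z) \<le> (\<Sum>i\<in>Basis. norm ((bt' (z \<bullet> i / r - of_int (v i)) / r *
      (\<Prod>j\<in>Basis - {i}. bt (z \<bullet> j / r - of_int (v j)))) *\<^sub>R i))"
    unfolding dpsi_def by (rule norm_sum)
  also have "\<dots> = (\<Sum>i\<in>Basis. \<bar>bt' (z \<bullet> i / r - of_int (v i))\<bar> / r *
      (\<Prod>j\<in>Basis - {i}. bt (z \<bullet> j / r - of_int (v j))))"
  proof (rule sum.cong)
    fix i :: 'a assume "i \<in> Basis"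
    have p: "0 \<le> (\<Prod>j\<in>Basis - {i}. bt (z \<bullet> j / r - of_int (v j)))"
      by (intro prod_nonneg) (simp add: bt_nonneg)
    show "norm ((bt' (z \<bullet> i / r - of_int (v i)) / r *
      (\<Prod>j\<in>Basis - {i}. bt (z \<bullet> j / r - of_int (v j)))) *\<^sub>R i) =
      \<bar>bt' (z \<bullet> i / r - of_int (v i))\<bar> / r * (\<Prod>j\<in>Basis - {i}. bt (z \<bullet> j / r - of_int (v j)))"
      using \<open>i \<in> Basis\<close> p assms by (simp add: abs_mult)
  qed simp
  finally show ?thesis .
qed

lemma dpsi_sum_bound:
  fixes z :: "'a::euclidean_space" and N :: int
  assumes "r > 0" and box: "\<And>i. i \<in> Basis \<Longrightarrow> \<bar>z \<bullet> i / r\<bar> \<le> real_of_int N - 1"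
  shows "(\<Sum>v\<in>PiE Basis (\<lambda>_. {-N..N}). norm (dpsi r v z)) \<le> DIM('a) * pi / r"
proof -
  define G where "G = PiE (Basis::'a set) (\<lambda>_. {-N..N})"
  define t where "t i = z \<bullet> i / r" for i
  have finG: "finite G" unfolding G_def by (intro finite_PiE) auto
  have "(\<Sum>v\<in>G. norm (dpsi r v z)) \<le> (\<Sum>v\<in>G. \<Sum>i\<in>Basis. \<bar>bt' (t i - of_int (v i))\<bar> / r *
      (\<Prod>j\<in>Basis - {i}. bt (t j - of_int (v j))))"
    by (rule sum_mono) (unfold t_def, rule dpsi_norm[OF assms(1)])
  also have "\<dots> = (\<Sum>i\<in>Basis. \<Sum>v\<in>G. \<bar>bt' (t i - of_int (v i))\<bar> / r *
      (\<Prod>j\<in>Basis - {i}. bt (t j - of_int (v j))))"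
    by (rule sum.swap)
  also have "\<dots> \<le> (\<Sum>i\<in>(Basis::'a set). pi / r)"
  proof (rule sum_mono)
    fix i :: 'a assume iB: "i \<in> Basis"
    define F where "F j k = (if j = i then \<bar>bt' (t j - of_int k)\<bar> else bt (t j - of_int k))" for j k
    have "(\<Sum>v\<in>G. \<bar>bt' (t i - of_int (v i))\<bar> / r * (\<Prod>j\<in>Basis - {i}. bt (t j - of_int (v j)))) =
        (\<Sum>v\<in>G. (\<Prod>j\<in>Basis. F j (v j))) / r"
    proof -
      have e: "\<bar>bt' (t i - of_int (v i))\<bar> / r * (\<Prod>j\<in>Basis - {i}. bt (t j - of_int (v j))) =
          (\<Prod>j\<in>Basis. F j (v j)) / r" for v
      proof -
        have "(\<Prod>j\<in>Basis. F j (v j)) = F i (v i) * (\<Prod>j\<in>Basis - {i}. F j (v j))"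
          using iB by (simp add: prod.remove)
        also have "(\<Prod>j\<in>Basis - {i}. F j (v j)) = (\<Prod>j\<in>Basis - {i}. bt (t j - of_int (v j)))"
          by (rule prod.cong) (auto simp: F_def)
        finally show ?thesis by (simp add: F_def)
      qed
      show ?thesis unfolding sum_divide_distrib by (rule sum.cong[OF refl]) (rule e)
    qed
    also have "(\<Sum>v\<in>G. (\<Prod>j\<in>Basis. F j (v j))) = (\<Prod>j\<in>Basis. \<Sum>k\<in>{-N..N}. F j k)"
      unfolding G_def by (rule prod_sum_PiE[symmetric]) auto
    also have "\<dots> = (\<Sum>k\<in>{-N..N}. F i k) * (\<Prod>j\<in>Basis - {i}. \<Sum>k\<in>{-N..N}. F j k)"
      using iB by (simp add: prod.remove)
    also have "(\<Prod>j\<in>Basis - {i}. \<Sum>k\<in>{-N..N}. F j k) = (\<Prod>j\<in>(Basis::'a set) - {i}. 1)"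
      by (rule prod.cong) (auto simp: F_def t_def intro!: bt_sum box)
    also have "(\<Sum>k\<in>{-N..N}. F i k) \<le> pi"
      unfolding F_def t_def using bt'_sum[OF box[OF iB]] by simp
    then have "(\<Sum>k\<in>{-N..N}. F i k) * (\<Prod>j\<in>(Basis::'a set) - {i}. 1) / r \<le> pi / r"
      using assms(1) by (simp add: divide_right_mono)
    finally show "(\<Sum>v\<in>G. \<bar>bt' (t i - of_int (v i))\<bar> / r * (\<Prod>j\<in>Basis - {i}. bt (t j - of_int (v j)))) \<le> pi / r" .
  qed
  also have "\<dots> = DIM('a) * pi / r" by simp
  finally show ?thesis unfolding G_def t_def .
qed


lemma bt_cont_compose [continuous_intros]: "continuous_on S f \<Longrightarrow> continuous_on S (\<lambda>x. bt (f x))"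
  by (rule continuous_on_compose2[OF bt_cont]) auto

lemma bt'_cont_compose [continuous_intros]: "continuous_on S f \<Longrightarrow> continuous_on S (\<lambda>x. bt' (f x))"
  by (rule continuous_on_compose2[OF bt'_cont]) auto

lemma dpsi_cont: "r \<noteq> 0 \<Longrightarrow> continuous_on S (dpsi r v)"
  unfolding dpsi_def[abs_def] by (intro continuous_intros) auto

lemma smooth_approx:
  fixes K :: "'a::euclidean_space set" and g :: "'a \<Rightarrow> real" and r e :: real
  assumes K: "compact K" "K \<noteq> {}" and r: "r > 0" and re: "2 * real DIM('a) * r < e"
    and glip: "\<And>w w'. w \<in> K \<Longrightarrow> w' \<in> K \<Longrightarrow> norm (w - w') < e \<Longrightarrow> \<bar>g w - g w'\<bar> \<le> norm (w - w')"
  shows "\<exists>f df. is_C1_deriv K f df \<and> (\<forall>z\<in>K. \<bar>f z - g z\<bar> \<le> 2 * real DIM('a) * r) \<and>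
     (\<forall>z\<in>K. norm (df z) \<le> 2 * pi * real DIM('a) ^ 2)"
proof -
  define d where "d = real DIM('a)"
  define proj where "proj p = (SOME w. w \<in> K \<and> (\<forall>u\<in>K. dist p w \<le> dist p u))" for p :: 'a
  have proj: "proj p \<in> K \<and> (\<forall>u\<in>K. dist p (proj p) \<le> dist p u)" for p
  proof -
    obtain w where "w \<in> K" "\<And>u. u \<in> K \<Longrightarrow> dist p w \<le> dist p u"
      using distance_attains_inf[OF compact_imp_closed[OF K(1)] K(2), of p] by blast
    then have "\<exists>w. w \<in> K \<and> (\<forall>u\<in>K. dist p w \<le> dist p u)" by blast
    then show ?thesis unfolding proj_def by (rule someI_ex)
  qed
  define pt where "pt v = (\<Sum>i\<in>(Basis::'a set). (r * of_int (v i)) *\<^sub>R i)" for v :: "'a \<Rightarrow> int"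
  have pt_inner: "pt v \<bullet> i = r * of_int (v i)" if "i \<in> Basis" for v i
  proof -
    have "pt v \<bullet> i = (\<Sum>j\<in>Basis. r * of_int (v j) * (if j = i then 1 else 0))"
      unfolding pt_def using that by (simp add: inner_sum_left inner_Basis)
    also have "\<dots> = (\<Sum>j\<in>Basis. if j = i then r * of_int (v j) else 0)"
      by (rule sum.cong) auto
    also have "\<dots> = r * of_int (v i)" using that by (simp add: sum.delta)
    finally show ?thesis .
  qed
  define c where "c v = g (proj (pt v))" for v
  obtain M where M: "\<And>z. z \<in> K \<Longrightarrow> norm z \<le> M"
    using compact_imp_bounded[OF K(1)] unfolding bounded_iff by blast
  define N :: int where "N = \<lceil>M / r\<rceil> + 2"
  define G where "G = PiE (Basis::'a set) (\<lambda>_. {-N..N})"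
  have finG: "finite G" unfolding G_def by (intro finite_PiE) auto
  define f where "f z = (\<Sum>v\<in>G. c v * psi r v z)" for z
  define df where "df z = (\<Sum>v\<in>G. c v *\<^sub>R dpsi r v z)" for z
  have fderiv: "(f has_derivative (\<lambda>h. df z \<bullet> h)) (at z)" for z
  proof -
    have "((\<lambda>z. \<Sum>v\<in>G. c v * psi r v z) has_derivative (\<lambda>h. \<Sum>v\<in>G. c v * (dpsi r v z \<bullet> h))) (at z)"
      by (intro has_derivative_sum has_derivative_mult_right psi_deriv)
    moreover have "(\<lambda>h. \<Sum>v\<in>G. c v * (dpsi r v z \<bullet> h)) = (\<lambda>h. df z \<bullet> h)"
      by (rule ext) (simp add: df_def inner_sum_left)
    ultimately show ?thesis unfolding f_def[abs_def] by simp
  qed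
  have dfcont: "continuous_on UNIV df"
    unfolding df_def[abs_def] using r by (intro continuous_intros dpsi_cont) auto
  have box: "\<bar>w \<bullet> i / r\<bar> \<le> real_of_int N - 1" if "z \<in> K" "norm (w - z) < r" "i \<in> Basis" for z w i
  proof -
    have "\<bar>z \<bullet> i\<bar> \<le> M" using Basis_le_norm[OF that(3), of z] M[OF that(1)] by linarith
    moreover have "\<bar>(w - z) \<bullet> i\<bar> \<le> norm (w - z)" by (rule Basis_le_norm[OF that(3)])
    ultimately have "\<bar>w \<bullet> i\<bar> \<le> M + r" using that(2) by (simp add: inner_diff_left)
    then have "\<bar>w \<bullet> i / r\<bar> \<le> M / r + 1" using r by (simp add: field_simps)
    moreover have "M / r \<le> real_of_int \<lceil>M / r\<rceil>" by (rule le_of_int_ceiling)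
    moreover have "real_of_int N - 1 = real_of_int \<lceil>M / r\<rceil> + 1" unfolding N_def by simp
    ultimately show ?thesis by linarith
  qed
  have close: "\<bar>c v - g z\<bar> \<le> 2 * d * r"
    if zK: "z \<in> K" and act: "\<And>i. i \<in> Basis \<Longrightarrow> \<bar>z \<bullet> i / r - of_int (v i)\<bar> < 1" for z v
  proof -
    have "norm (z - pt v) \<le> (\<Sum>i\<in>(Basis::'a set). \<bar>(z - pt v) \<bullet> i\<bar>)" by (rule norm_le_l1)
    also have "\<dots> \<le> (\<Sum>i\<in>(Basis::'a set). r)"
    proof (rule sum_mono)
      fix i :: 'a assume iB: "i \<in> Basis"
      have "(z - pt v) \<bullet> i = r * (z \<bullet> i / r - of_int (v i))"
        using r by (simp add: inner_diff_left pt_inner[OF iB] field_simps)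
      then have "\<bar>(z - pt v) \<bullet> i\<bar> = r * \<bar>z \<bullet> i / r - of_int (v i)\<bar>" using r by (simp add: abs_mult)
      also have "\<dots> \<le> r * 1" using act[OF iB] r by (intro mult_left_mono) auto
      finally show "\<bar>(z - pt v) \<bullet> i\<bar> \<le> r" by simp
    qed
    also have "\<dots> = d * r" by (simp add: d_def)
    finally have n1: "norm (z - pt v) \<le> d * r" .
    have "dist (pt v) (proj (pt v)) \<le> dist (pt v) z" using proj[of "pt v"] zK by blast
    then have n2: "norm (proj (pt v) - pt v) \<le> d * r" using n1 by (simp add: dist_norm norm_minus_commute)
    have "norm (proj (pt v) - z) \<le> norm (proj (pt v) - pt v) + norm (pt v - z)"
      by (rule norm_diff_triangle_ineq[THEN order_trans[rotated]]) (simp add: norm_triangle_sub)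
    also have "\<dots> \<le> 2 * d * r" using n1 n2 by (simp add: norm_minus_commute)
    finally have n3: "norm (proj (pt v) - z) \<le> 2 * d * r" .
    have "\<bar>g (proj (pt v)) - g z\<bar> \<le> norm (proj (pt v) - z)"
      using glip[of "proj (pt v)" z] proj[of "pt v"] zK n3 re by (simp add: d_def)
    then show ?thesis using n3 by (simp add: c_def)
  qed
  have inact: "psi r v z = 0 \<and> dpsi r v z = 0"
    if nact: "\<not> (\<forall>i\<in>Basis. \<bar>z \<bullet> i / r - of_int (v i)\<bar> < 1)" for z v
  proof -
    obtain j where "j \<in> Basis" "1 \<le> \<bar>z \<bullet> j / r - of_int (v j)\<bar>" using nact by force
    then show ?thesis using psi_active by blast
  qed
  have bnd1: "\<bar>c v - g z\<bar> * psi r v z \<le> 2 * d * r * psi r v z" if "z \<in> K" for z v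
  proof (cases "\<forall>i\<in>Basis. \<bar>z \<bullet> i / r - of_int (v i)\<bar> < 1")
    case True
    have "0 \<le> psi r v z" unfolding psi_def by (intro prod_nonneg) (simp add: bt_nonneg)
    then show ?thesis using close[OF that] True by (intro mult_right_mono) auto
  next
    case False then show ?thesis using inact[OF False] by simp
  qed
  have bnd2: "\<bar>c v - g z\<bar> * norm (dpsi r v z) \<le> 2 * d * r * norm (dpsi r v z)" if "z \<in> K" for z v
  proof (cases "\<forall>i\<in>Basis. \<bar>z \<bullet> i / r - of_int (v i)\<bar> < 1")
    case True
    then show ?thesis using close[OF that] True by (intro mult_right_mono) auto
  next
    case False then show ?thesis using inact[OF False] by simp
  qed
  have boxK: "\<bar>z \<bullet> i / r\<bar> \<le> real_of_int N - 1" if "z \<in> K" "i \<in> Basis" for z i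
    using box[OF that(1) _ that(2), of z] r by simp
  have sum1: "(\<Sum>v\<in>G. psi r v z) = 1" if "z \<in> K" for z
    unfolding G_def by (rule psi_sum) (rule boxK[OF that])
  have sum0: "(\<Sum>v\<in>G. dpsi r v z) = 0" if zK: "z \<in> K" for z
  proof -
    define D where "D = (\<Sum>v\<in>G. dpsi r v z)"
    have hd: "((\<lambda>w. \<Sum>v\<in>G. psi r v w) has_derivative (\<lambda>h. D \<bullet> h)) (at z)"
    proof -
      have "((\<lambda>w. \<Sum>v\<in>G. psi r v w) has_derivative (\<lambda>h. \<Sum>v\<in>G. dpsi r v z \<bullet> h)) (at z)"
        by (intro has_derivative_sum psi_deriv)
      then show ?thesis by (simp add: D_def inner_sum_left)
    qed
    have one: "(\<Sum>v\<in>G. psi r v w) = 1" if "w \<in> ball z r" for w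
      unfolding G_def
    proof (rule psi_sum)
      fix i :: 'a assume "i \<in> Basis"
      then show "\<bar>w \<bullet> i / r\<bar> \<le> real_of_int N - 1"
        using box[OF zK _ \<open>i \<in> Basis\<close>, of w] that by (simp add: dist_norm norm_minus_commute)
    qed
    have "((\<lambda>w. 1) has_derivative (\<lambda>h. D \<bullet> h)) (at z)"
      by (rule has_derivative_transform_within_open[OF hd open_ball]) (use r one in auto)
    then have "(\<lambda>h. D \<bullet> h) = (\<lambda>h. 0)"
      using has_derivative_unique has_derivative_const by blast
    then have "D \<bullet> D = 0" by metis
    then show ?thesis unfolding D_def by simp
  qed
  have fapprox: "\<bar>f z - g z\<bar> \<le> 2 * d * r" if zK: "z \<in> K" for z
  proof -
    have "f z - g z = (\<Sum>v\<in>G. (c v - g z) * psi r v z)"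
      using sum1[OF zK] by (simp add: f_def algebra_simps sum_subtractf sum_distrib_left[symmetric])
    also have "\<bar>\<dots>\<bar> \<le> (\<Sum>v\<in>G. \<bar>(c v - g z) * psi r v z\<bar>)" by (rule sum_abs)
    also have "\<dots> \<le> (\<Sum>v\<in>G. 2 * d * r * psi r v z)"
    proof (rule sum_mono)
      fix v assume "v \<in> G"
      have "0 \<le> psi r v z" unfolding psi_def by (intro prod_nonneg) (simp add: bt_nonneg)
      then show "\<bar>(c v - g z) * psi r v z\<bar> \<le> 2 * d * r * psi r v z"
        using bnd1[OF zK, of v] by (simp add: abs_mult)
    qed
    also have "\<dots> = 2 * d * r" using sum1[OF zK] by (simp add: sum_distrib_left[symmetric])
    finally show ?thesis .
  qed
  have dfbound: "norm (df z) \<le> 2 * pi * d ^ 2" if zK: "z \<in> K" for z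
  proof -
    have "df z = (\<Sum>v\<in>G. (c v - g z) *\<^sub>R dpsi r v z)"
      using sum0[OF zK] by (simp add: df_def scaleR_diff_left sum_subtractf scaleR_sum_right[symmetric])
    also have "norm \<dots> \<le> (\<Sum>v\<in>G. norm ((c v - g z) *\<^sub>R dpsi r v z))" by (rule norm_sum)
    also have "\<dots> \<le> (\<Sum>v\<in>G. 2 * d * r * norm (dpsi r v z))"
      by (rule sum_mono) (use bnd2[OF zK] in simp)
    also have "\<dots> = 2 * d * r * (\<Sum>v\<in>G. norm (dpsi r v z))" by (simp add: sum_distrib_left)
    also have "\<dots> \<le> 2 * d * r * (d * pi / r)"
    proof (rule mult_left_mono)
      show "(\<Sum>v\<in>G. norm (dpsi r v z)) \<le> d * pi / r"
        unfolding G_def d_def by (rule dpsi_sum_bound[OF r boxK[OF zK]])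
      show "0 \<le> 2 * d * r" using r by (simp add: d_def)
    qed
    also have "\<dots> = 2 * pi * d ^ 2" using r by (simp add: power2_eq_square)
    finally show ?thesis .
  qed
  have C1: "is_C1_deriv K f df"
    unfolding is_C1_deriv_def
  proof (intro conjI ballI)
    show "continuous_on K df" using dfcont continuous_on_subset by blast
    fix z assume "z \<in> K"
    have "(f has_derivative (\<lambda>h. df z \<bullet> h)) (at z within K)"
      using fderiv by (rule has_derivative_at_withinI)
    then have "((\<lambda>y. (1 / norm (y - z)) *\<^sub>R (f y - (f z + df z \<bullet> (y - z)))) \<longlongrightarrow> 0) (at z within K)"
      unfolding has_derivative_within by blast
    moreover have "(\<lambda>y. (1 / norm (y - z)) *\<^sub>R (f y - (f z + df z \<bullet> (y - z)))) =
        (\<lambda>y. (f y - f z - df z \<bullet> (y - z)) / norm (y - z))"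
      by (rule ext) (simp add: divide_inverse algebra_simps)
    ultimately show "((\<lambda>y. (f y - f z - df z \<bullet> (y - z)) / norm (y - z)) \<longlongrightarrow> 0) (at z within K)"
      by simp
  qed
  show ?thesis
    apply (rule exI[of _ f], rule exI[of _ df])
    using C1 fapprox dfbound unfolding d_def by blast
qed


lemma chain_dist:
  fixes z :: "nat \<Rightarrow> 'a::real_normed_vector"
  assumes "i \<le> j"
  shows "norm (z j - z i) \<le> (\<Sum>m<j. norm (z (Suc m) - z m)) - (\<Sum>m<i. norm (z (Suc m) - z m))"
  using assms
proof (induction j rule: dec_induct)
  case base
  then show ?case by simp
next
  case (step n)
  have "norm (z (Suc n) - z i) \<le> norm (z (Suc n) - z n) + norm (z n - z i)"
    using norm_triangle_ineq[of "z (Suc n) - z n" "z n - z i"] by simp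
  then show ?case using step by simp
qed

lemma chain_param:
  fixes z :: "nat \<Rightarrow> 'a::real_normed_vector"
  assumes "\<forall>i\<le>k. z i \<in> K" "\<forall>i<k. norm (z (Suc i) - z i) < e" "0 < e"
    and "(\<Sum>i<k. norm (z (Suc i) - z i)) \<le> L"
  shows "\<exists>P. P 0 = z 0 \<and> P 1 = z k \<and> (\<forall>t\<in>{0..1}. P t \<in> K) \<and>
     (\<forall>s t. 0 \<le> s \<longrightarrow> s \<le> t \<longrightarrow> t \<le> 1 \<longrightarrow> norm (P t - P s) \<le> L * (t - s) + e)"
proof -
  define S where "S j = (\<Sum>i<j. norm (z (Suc i) - z i))" for j
  define l where "l = S k"
  have l0: "0 \<le> l" unfolding l_def S_def by (simp add: sum_nonneg)
  have lL: "l \<le> L" using assms(4) unfolding l_def S_def by simp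
  define J where "J t = Max {j. j \<le> k \<and> S j \<le> t * l}" for t
  have S0: "S 0 = 0" by (simp add: S_def)
  have fin: "finite {j. j \<le> k \<and> S j \<le> t * l}" for t by simp
  have Smono: "i \<le> j \<Longrightarrow> S i \<le> S j" for i j
    unfolding S_def by (rule sum_mono2[OF finite_lessThan]) simp_all
  have Sdist: "i \<le> j \<Longrightarrow> norm (z j - z i) \<le> S j - S i" for i j
    using chain_dist[of i j z] by (simp add: S_def)
  have Jmem: "J t \<le> k \<and> S (J t) \<le> t * l" if "0 \<le> t" for t
  proof -
    have "0 \<in> {j. j \<le> k \<and> S j \<le> t * l}" using S0 that l0 by simp
    then have "J t \<in> {j. j \<le> k \<and> S j \<le> t * l}"
      unfolding J_def by (intro Max_in fin) auto
    then show ?thesis by simp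
  qed
  have Jmax: "j \<le> k \<Longrightarrow> S j \<le> t * l \<Longrightarrow> j \<le> J t" for j t
    unfolding J_def by (intro Max_ge fin) simp
  define P where "P t = z (J t)" for t
  have A: "P 0 = z 0"
  proof -
    have "S (J 0) \<le> 0" using Jmem[of 0] by simp
    moreover have "0 \<le> S (J 0)" using Smono[of 0 "J 0"] S0 by simp
    ultimately have "S (J 0) = 0" by simp
    then have "norm (z (J 0) - z 0) \<le> 0" using Sdist[of 0 "J 0"] S0 by simp
    then show ?thesis by (simp add: P_def)
  qed
  have B: "P 1 = z k"
  proof -
    have "k \<le> J 1" by (rule Jmax) (auto simp: l_def)
    then have "J 1 = k" using Jmem[of 1] by simp
    then show ?thesis by (simp add: P_def)
  qed
  have C: "\<forall>t\<in>{0..1}. P t \<in> K"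
  proof
    fix t :: real assume "t \<in> {0..1}"
    then have "J t \<le> k" using Jmem[of t] by simp
    then show "P t \<in> K" using assms(1) by (simp add: P_def)
  qed
  have D0: "norm (P t - P s) \<le> L * (t - s) + e" if "0 \<le> s" "s \<le> t" "t \<le> 1" for s t
  proof -
    have st: "J s \<le> J t"
    proof (rule Jmax)
      show "J s \<le> k" using Jmem[of s] that by simp
      have "S (J s) \<le> s * l" using Jmem[of s] that by simp
      also have "\<dots> \<le> t * l" using that l0 by (simp add: mult_right_mono)
      finally show "S (J s) \<le> t * l" .
    qed
    have d1: "norm (P t - P s) \<le> S (J t) - S (J s)" using Sdist[OF st] by (simp add: P_def)
    show ?thesis
    proof (cases "J s < k")
      case True
      have "\<not> Suc (J s) \<le> J s" by simp
      then have "\<not> S (Suc (J s)) \<le> s * l" using Jmax[of "Suc (J s)" s] True by auto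
      moreover have "S (Suc (J s)) = S (J s) + norm (z (Suc (J s)) - z (J s))"
        by (simp add: S_def)
      moreover have "norm (z (Suc (J s)) - z (J s)) < e" using assms(2) True by simp
      ultimately have "S (J s) > s * l - e" by simp
      moreover have "S (J t) \<le> t * l" using Jmem[of t] that by simp
      moreover have "(t - s) * l \<le> (t - s) * L" using lL that by (intro mult_left_mono) auto
      then have "t * l - s * l \<le> L * (t - s)" by (metis left_diff_distrib mult.commute)
      ultimately show ?thesis using d1 by linarith
    next
      case False
      then have "J s = k" using Jmem[of s] that by simp
      then have "J t = k" using st Jmem[of t] that by simp
      have "0 \<le> L * (t - s)" using l0 lL that by (intro mult_nonneg_nonneg) auto
      then show ?thesis using \<open>J s = k\<close> \<open>J t = k\<close> assms(3) by (simp add: P_def)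
    qed
  qed
  have D: "\<forall>s t. 0 \<le> s \<longrightarrow> s \<le> t \<longrightarrow> t \<le> 1 \<longrightarrow> norm (P t - P s) \<le> L * (t - s) + e"
    by (intro allI impI, rule D0) assumption+
  show ?thesis using A B C D by blast
qed


lemma lipschitz_telescope:
  fixes g :: "real \<Rightarrow> 'a::real_normed_vector"
  assumes lip: "\<And>a b. norm (g b - g a) \<le> L * \<bar>b - a\<bar>"
    and mono: "\<forall>j<n. t j \<le> t (Suc j)"
  shows "(\<Sum>j\<in>{1..n}. norm (g (t j) - g (t (j - 1)))) \<le> L * (t n - t 0)"
  using mono
proof (induction n)
  case 0
  then show ?case by simp
next
  case (Suc n)
  have "t n \<le> t (Suc n)" using Suc.prems by simp
  then have e: "\<bar>t (Suc n) - t n\<bar> = t (Suc n) - t n" by simp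
  have "norm (g (t (Suc n)) - g (t n)) \<le> L * (t (Suc n) - t n)"
    using lip[of "t (Suc n)" "t n"] unfolding e .
  moreover have "(\<Sum>j\<in>{1..n}. norm (g (t j) - g (t (j - 1)))) \<le> L * (t n - t 0)"
    using Suc.IH Suc.prems by simp
  moreover have "(\<Sum>j\<in>{1..Suc n}. norm (g (t j) - g (t (j - 1)))) =
      (\<Sum>j\<in>{1..n}. norm (g (t j) - g (t (j - 1)))) + norm (g (t (Suc n)) - g (t n))"
    by simp
  ultimately show ?case by (simp add: algebra_simps)
qed

lemma lipschitz_path:
  fixes g :: "real \<Rightarrow> 'a::real_normed_vector"
  assumes lip: "\<And>a b. norm (g b - g a) \<le> L * \<bar>b - a\<bar>"
    and cont: "continuous_on UNIV g" and img: "g ` {0..1} \<subseteq> K"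
  shows "rectifiable_path_in K g 0 1 \<and> path_length g 0 1 \<le> L"
proof -
  have bnd: "c \<le> L" if cin: "c \<in> chord_sums g 0 1" for c
  proof -
    obtain t :: "nat \<Rightarrow> real" and n :: nat where c: "c = (\<Sum>j\<in>{1..n}. norm (g (t j) - g (t (j - 1))))"
      and t: "t 0 = 0" "t n = 1" "\<forall>j<n. t j \<le> t (Suc j)"
      using cin unfolding chord_sums_def by blast
    have "c \<le> L * (t n - t 0)" unfolding c by (rule lipschitz_telescope[OF lip t(3)])
    then show ?thesis using t by simp
  qed
  have ne: "chord_sums g 0 1 \<noteq> {}"
  proof -
    define t :: "nat \<Rightarrow> real" where "t j = (if j = 0 then 0 else 1)" for j
    have "(\<Sum>j\<in>{1..1}. norm (g (t j) - g (t (j - 1)))) \<in> chord_sums g 0 1"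
      unfolding chord_sums_def by (rule CollectI, rule exI[of _ t], rule exI[of _ 1]) (simp add: t_def)
    then show ?thesis by blast
  qed
  have "bdd_above (chord_sums g 0 1)" using bnd by (intro bdd_aboveI) 
  moreover have "path_length g 0 1 \<le> L" unfolding path_length_def
    using ne bnd by (intro cSup_least) auto
  moreover have "continuous_on {0..1} g" using cont continuous_on_subset by blast
  ultimately show ?thesis using img unfolding rectifiable_path_in_def by simp
qed


lemma chains_to_path:
  fixes K :: "'a::euclidean_space set"
  assumes "compact K"
    and ch: "\<And>e. e > 0 \<Longrightarrow> \<exists>z k. z 0 = x \<and> z k = y \<and> (\<forall>i\<le>k. z i \<in> K) \<and>
       (\<forall>i<k. norm (z (Suc i) - z i) < e) \<and> (\<Sum>i<k. norm (z (Suc i) - z i)) \<le> L"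
  shows "\<exists>g a b. rectifiable_path_in K g a b \<and> g a = x \<and> g b = y \<and> path_length g a b \<le> L"
proof -
  define E :: "nat \<Rightarrow> real" where "E n = inverse (real (Suc n))" for n
  have Epos: "E n > 0" for n by (simp add: E_def)
  have ex: "\<forall>n. \<exists>P. P 0 = x \<and> P 1 = y \<and> (\<forall>t\<in>{0..1}. P t \<in> K) \<and>
     (\<forall>s t. 0 \<le> s \<longrightarrow> s \<le> t \<longrightarrow> t \<le> 1 \<longrightarrow> norm (P t - P s) \<le> L * (t - s) + E n)"
  proof
    fix n
    obtain z :: "nat \<Rightarrow> 'a" and k :: nat where z: "z 0 = x" "z k = y" "\<forall>i\<le>k. z i \<in> K"
       "\<forall>i<k. norm (z (Suc i) - z i) < E n" "(\<Sum>i<k. norm (z (Suc i) - z i)) \<le> L"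
      using ch[OF Epos[of n]] by blast
    show "\<exists>P. P 0 = x \<and> P 1 = y \<and> (\<forall>t\<in>{0..1}. P t \<in> K) \<and>
     (\<forall>s t. 0 \<le> s \<longrightarrow> s \<le> t \<longrightarrow> t \<le> 1 \<longrightarrow> norm (P t - P s) \<le> L * (t - s) + E n)"
      using chain_param[OF z(3) z(4) Epos z(5)] z(1,2) by simp
  qed
  obtain PP where PPall: "\<forall>n. PP n 0 = x \<and> PP n 1 = y \<and> (\<forall>t\<in>{0..1}. PP n t \<in> K) \<and>
     (\<forall>s t. 0 \<le> s \<longrightarrow> s \<le> t \<longrightarrow> t \<le> 1 \<longrightarrow> norm (PP n t - PP n s) \<le> L * (t - s) + E n)"
    using choice[OF ex] by blast
  have PP0: "\<And>n. PP n 0 = x" and PP1: "\<And>n. PP n 1 = y"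
    and PPK: "\<And>n t. t \<in> {0..1} \<Longrightarrow> PP n t \<in> K"
    and PPL: "\<And>n s t. 0 \<le> s \<Longrightarrow> s \<le> t \<Longrightarrow> t \<le> 1 \<Longrightarrow> norm (PP n t - PP n s) \<le> L * (t - s) + E n"
    using PPall by simp_all
  have L0: "0 \<le> L"
  proof -
    obtain z :: "nat \<Rightarrow> 'a" and k :: nat where "(\<Sum>i<k. norm (z (Suc i) - z i)) \<le> L"
      using ch[of 1] by auto
    moreover have "0 \<le> (\<Sum>i<k. norm (z (Suc i) - z i))" by (simp add: sum_nonneg)
    ultimately show ?thesis by linarith
  qed
  define cl :: "real \<Rightarrow> real" where "cl t = max 0 (min 1 t)" for t
  have cl01: "cl t \<in> {0..1}" for t by (simp add: cl_def)
  have cllip: "\<bar>cl t - cl s\<bar> \<le> \<bar>t - s\<bar>" for s t by (simp add: cl_def)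
  define Q where "Q n t = PP n (cl t)" for n t
  obtain M where M: "\<And>v. v \<in> K \<Longrightarrow> norm v \<le> M"
    using compact_imp_bounded[OF assms(1)] unfolding bounded_iff by blast
  have QM: "norm (Q n t) \<le> M" for n t unfolding Q_def by (rule M, rule PPK, rule cl01)
  have QL: "norm (Q n t - Q n s) \<le> L * \<bar>t - s\<bar> + E n" for n s t
  proof -
    have "norm (Q n t - Q n s) \<le> L * \<bar>cl t - cl s\<bar> + E n"
    proof (cases "cl s \<le> cl t")
      case True
      then show ?thesis using PPL[of "cl s" "cl t" n] cl01[of s] cl01[of t] by (simp add: Q_def)
    next
      case False
      then show ?thesis using PPL[of "cl t" "cl s" n] cl01[of s] cl01[of t]
        by (simp add: Q_def norm_minus_commute)
    qed
    also have "\<dots> \<le> L * \<bar>t - s\<bar> + E n" using cllip[of t s] L0 by (simp add: mult_left_mono)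
    finally show ?thesis .
  qed
  obtain r where r: "strict_mono (r :: nat \<Rightarrow> nat)"
    and conv: "\<And>q. q \<in> \<rat> \<Longrightarrow> \<exists>l. (\<lambda>n. Q (r n) q) \<longlonglongrightarrow> l"
    using function_convergent_subsequence[of "\<rat>" Q M] countable_rat QM by blast
  define G where "G q = lim (\<lambda>n. Q (r n) q)" for q
  have Gc: "(\<lambda>n. Q (r n) q) \<longlonglongrightarrow> G q" if qQ: "q \<in> \<rat>" for q
  proof -
    obtain l where l: "(\<lambda>n. Q (r n) q) \<longlonglongrightarrow> l" using conv[OF qQ] by blast
    then have "G q = l" unfolding G_def by (rule limI)
    then show ?thesis using l by simp
  qed
  have ER: "(\<lambda>n. E (r n)) \<longlonglongrightarrow> 0"
    using LIMSEQ_subseq_LIMSEQ[OF LIMSEQ_inverse_real_of_nat r] by (simp add: E_def o_def)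
  have GL: "norm (G t - G s) \<le> L * \<bar>t - s\<bar>" if "s \<in> \<rat>" "t \<in> \<rat>" for s t
  proof (rule LIMSEQ_le)
    show "(\<lambda>n. norm (Q (r n) t - Q (r n) s)) \<longlonglongrightarrow> norm (G t - G s)"
      by (intro tendsto_intros Gc that)
    show "(\<lambda>n. L * \<bar>t - s\<bar> + E (r n)) \<longlonglongrightarrow> L * \<bar>t - s\<bar>"
      using tendsto_add[OF tendsto_const ER] by simp
    show "\<exists>N. \<forall>n\<ge>N. norm (Q (r n) t - Q (r n) s) \<le> L * \<bar>t - s\<bar> + E (r n)"
      using QL by blast
  qed
  have GK: "G q \<in> K" if "q \<in> \<rat>" for q
    by (rule closed_sequentially[OF compact_imp_closed[OF assms(1)] _ Gc[OF that]])
      (simp add: Q_def PPK[OF cl01])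
  have uc: "uniformly_continuous_on \<rat> G"
    unfolding uniformly_continuous_on_def
  proof (intro allI impI)
    fix e :: real assume "0 < e"
    show "\<exists>d>0. \<forall>x\<in>\<rat>. \<forall>x'\<in>\<rat>. dist x' x < d \<longrightarrow> dist (G x') (G x) < e"
    proof (intro exI[of _ "e / (L + 1)"] conjI ballI impI)
      show "0 < e / (L + 1)" using \<open>0 < e\<close> L0 by simp
      fix a b :: real assume ab: "a \<in> \<rat>" "b \<in> \<rat>" "dist b a < e / (L + 1)"
      have "dist (G b) (G a) \<le> L * \<bar>b - a\<bar>" using GL[OF ab(1,2)] by (simp add: dist_norm)
      also have "\<dots> \<le> (L + 1) * \<bar>b - a\<bar>" by (simp add: mult_right_mono)
      also have "\<dots> < (L + 1) * (e / (L + 1))"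
        using ab(3) L0 by (intro mult_strict_left_mono) (auto simp: dist_real_def)
      also have "\<dots> = e" using L0 by simp
      finally show "dist (G b) (G a) < e" .
    qed
  qed
  obtain g where guc: "uniformly_continuous_on (closure \<rat>) g" and gG: "\<And>q. q \<in> \<rat> \<Longrightarrow> G q = g q"
    and "\<And>Y h x. \<rat> \<subseteq> Y \<Longrightarrow> Y \<subseteq> closure \<rat> \<Longrightarrow> continuous_on Y h \<Longrightarrow> (\<And>x. x \<in> \<rat> \<Longrightarrow> G x = h x) \<Longrightarrow> x \<in> Y \<Longrightarrow> h x = g x"
    by (rule uniformly_continuous_on_extension_on_closure[OF uc]) blast
  have gcont: "continuous_on UNIV g"
    using uniformly_continuous_imp_continuous[OF guc] by (simp add: Rats_closure_real)
  have glip: "norm (g b - g a) \<le> L * \<bar>b - a\<bar>" for a b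
  proof -
    have "a \<in> closure \<rat>" by (simp add: Rats_closure_real)
    then obtain qa where qa: "\<And>n. qa n \<in> \<rat>" "qa \<longlonglongrightarrow> a"
      unfolding closure_sequential by blast
    have "b \<in> closure \<rat>" by (simp add: Rats_closure_real)
    then obtain qb where qb: "\<And>n. qb n \<in> \<rat>" "qb \<longlonglongrightarrow> b"
      unfolding closure_sequential by blast
    have ga: "(\<lambda>n. g (qa n)) \<longlonglongrightarrow> g a"
      using continuous_on_tendsto_compose[OF gcont qa(2)] by simp
    have gb: "(\<lambda>n. g (qb n)) \<longlonglongrightarrow> g b"
      using continuous_on_tendsto_compose[OF gcont qb(2)] by simp
    show ?thesis
    proof (rule LIMSEQ_le)
      show "(\<lambda>n. norm (g (qb n) - g (qa n))) \<longlonglongrightarrow> norm (g b - g a)"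
        by (intro tendsto_intros ga gb)
      show "(\<lambda>n. L * \<bar>qb n - qa n\<bar>) \<longlonglongrightarrow> L * \<bar>b - a\<bar>"
        by (intro tendsto_intros qa qb)
      show "\<exists>N. \<forall>n\<ge>N. norm (g (qb n) - g (qa n)) \<le> L * \<bar>qb n - qa n\<bar>"
      proof (intro exI allI impI)
        fix n :: nat
        show "norm (g (qb n) - g (qa n)) \<le> L * \<bar>qb n - qa n\<bar>"
          using GL[OF qa(1)[of n] qb(1)[of n]] gG[OF qa(1)[of n]] gG[OF qb(1)[of n]] by simp
      qed
    qed
  qed
  have gimg: "g ` {0..1} \<subseteq> K"
  proof -
    have "g ` closure \<rat> \<subseteq> K"
    proof (rule image_closure_subset)
      show "continuous_on (closure \<rat>) g" using gcont by (simp add: Rats_closure_real)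
      show "closed K" using compact_imp_closed[OF assms(1)] .
      show "g ` \<rat> \<subseteq> K"
      proof
        fix v assume "v \<in> g ` \<rat>"
        then obtain q where q: "q \<in> \<rat>" "v = g q" by blast
        then show "v \<in> K" using GK[OF q(1)] gG[OF q(1)] by simp
      qed
    qed
    then have "g ` UNIV \<subseteq> K" by (simp add: Rats_closure_real)
    then show ?thesis by blast
  qed
  have g0: "g 0 = x"
  proof -
    have "(\<lambda>n. Q (r n) 0) = (\<lambda>n. x)" by (simp add: Q_def cl_def PP0)
    then have "(\<lambda>n. Q (r n) 0) \<longlonglongrightarrow> x" by simp
    then have "G 0 = x" using LIMSEQ_unique[OF Gc] by simp
    then show ?thesis using gG[of 0] by simp
  qed
  have g1: "g 1 = y"
  proof -
    have "(\<lambda>n. Q (r n) 1) = (\<lambda>n. y)" by (simp add: Q_def cl_def PP1)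
    then have "(\<lambda>n. Q (r n) 1) \<longlonglongrightarrow> y" by simp
    then have "G 1 = y" using LIMSEQ_unique[OF Gc] by simp
    then show ?thesis using gG[of 1] by simp
  qed
  have R: "rectifiable_path_in K g 0 1 \<and> path_length g 0 1 \<le> L"
    by (rule lipschitz_path[OF glip gcont gimg])
  show ?thesis
    apply (rule exI[of _ g], rule exI[of _ 0], rule exI[of _ 1])
    using R g0 g1 by simp
qed



lemma const_path:
  fixes x :: "'a::euclidean_space"
  assumes "x \<in> K"
  shows "rectifiable_path_in K (\<lambda>_. x) 0 0 \<and> path_length (\<lambda>_. x) 0 0 = 0"
proof -
  have cs: "chord_sums (\<lambda>_. x) 0 0 = {0}"
  proof
    show "chord_sums (\<lambda>_. x) 0 0 \<subseteq> {0}" unfolding chord_sums_def by auto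
    have "(\<Sum>j\<in>{1..0::nat}. norm (x - x)) \<in> chord_sums (\<lambda>_. x) 0 0"
      unfolding chord_sums_def by (rule CollectI, rule exI[of _ "\<lambda>_. 0"], rule exI[of _ 0]) simp
    then show "{0} \<subseteq> chord_sums (\<lambda>_. x) 0 0" by simp
  qed
  show ?thesis unfolding rectifiable_path_in_def path_length_def cs using assms by auto
qed

theorem mainTheorem8:
  fixes K :: "'a::euclidean_space set"
  assumes "compact K" and "connected K"
    and "\<forall>x\<in>K. \<exists>C>0. \<forall>f\<in>C1 K. \<forall>y\<in>K - {x}.
           \<bar>f y - f x\<bar> / norm (y - x) \<le> C * C1_norm K f"
  shows "pointwise_whitney_regular K"
proof (rule ccontr)
  assume nreg: "\<not> pointwise_whitney_regular K"
  then obtain x where xK: "x \<in> K" and nx: "\<not> (\<exists>V C. open V \<and> x \<in> V \<and> C > 0 \<and>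
     (\<forall>y\<in>V \<inter> K. \<exists>g a b. rectifiable_path_in K g a b \<and> g a = x \<and> g b = y \<and>
        path_length g a b \<le> C * norm (x - y)))"
    unfolding pointwise_whitney_regular_def by blast
  have bad: "\<exists>y\<in>V \<inter> K. \<not> (\<exists>g a b. rectifiable_path_in K g a b \<and> g a = x \<and> g b = y \<and>
        path_length g a b \<le> C * norm (x - y))" if "open V" "x \<in> V" "C > 0" for V C
  proof (rule ccontr)
    assume "\<not> ?thesis"
    then have "\<forall>y\<in>V \<inter> K. \<exists>g a b. rectifiable_path_in K g a b \<and> g a = x \<and> g b = y \<and>
        path_length g a b \<le> C * norm (x - y)" by blast
    then show False using nx that by blast
  qed
  have Kne: "K \<noteq> {}" using xK by blast
  obtain C0 where C0: "C0 > 0" and hyp: "\<And>f y. f \<in> C1 K \<Longrightarrow> y \<in> K - {x} \<Longrightarrow>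
      \<bar>f y - f x\<bar> / norm (y - x) \<le> C0 * C1_norm K f"
    using assms(3) xK by blast
  define d where "d = real DIM('a)"
  have d1: "1 \<le> d" unfolding d_def using DIM_positive[where 'a='a] by linarith
  define B where "B = 2 * pi * d ^ 2"
  have B0: "0 \<le> B" unfolding B_def by simp
  define A where "A = 2 * C0 * (2 + B) + 1"
  have A1: "A \<ge> 1" unfolding A_def using C0 B0 by simp
  then have Apos: "A > 0" by simp
  obtain y where yV: "y \<in> ball x (1 / A)" and yK: "y \<in> K"
    and nopath: "\<not> (\<exists>g a b. rectifiable_path_in K g a b \<and> g a = x \<and> g b = y \<and>
        path_length g a b \<le> A * norm (x - y))"
    using bad[of "ball x (1 / A)" A] Apos by auto
  define \<rho> where "\<rho> = norm (x - y)"
  have yx: "y \<noteq> x"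
  proof
    assume "y = x"
    have ex: "\<exists>g a b. rectifiable_path_in K g a b \<and> g a = x \<and> g b = y \<and>
        path_length g a b \<le> A * norm (x - y)"
      by (rule exI[of _ "\<lambda>_. x"], rule exI[of _ 0], rule exI[of _ 0])
        (use const_path[OF xK] \<open>y = x\<close> in simp)
    from nopath ex show False by contradiction
  qed
  have rho0: "\<rho> > 0" using yx unfolding \<rho>_def by simp
  have rho1: "A * \<rho> < 1" using yV Apos unfolding \<rho>_def by (simp add: dist_norm field_simps)
  define T where "T = A * \<rho>"
  have T0: "T > 0" unfolding T_def using Apos rho0 by simp
  have "\<not> (\<forall>e>0. \<exists>z k. z 0 = x \<and> z k = y \<and> (\<forall>i\<le>k. z i \<in> K) \<and>
       (\<forall>i<k. norm (z (Suc i) - z i) < e) \<and> (\<Sum>i<k. norm (z (Suc i) - z i)) \<le> T)"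
  proof
    assume ch: "\<forall>e>0. \<exists>z k. z 0 = x \<and> z k = y \<and> (\<forall>i\<le>k. z i \<in> K) \<and>
       (\<forall>i<k. norm (z (Suc i) - z i) < e) \<and> (\<Sum>i<k. norm (z (Suc i) - z i)) \<le> T"
    have "\<exists>g a b. rectifiable_path_in K g a b \<and> g a = x \<and> g b = y \<and> path_length g a b \<le> T"
      by (rule chains_to_path[OF assms(1)]) (use ch in blast)
    with nopath show False unfolding T_def \<rho>_def by contradiction
  qed
  then obtain e where e0: "e > 0" and ne: "\<not> (\<exists>z k. z 0 = x \<and> z k = y \<and> (\<forall>i\<le>k. z i \<in> K) \<and>
       (\<forall>i<k. norm (z (Suc i) - z i) < e) \<and> (\<Sum>i<k. norm (z (Suc i) - z i)) \<le> T)"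
    by blast
  have long: "T < (\<Sum>i<k. norm (z (Suc i) - z i))"
    if "z 0 = x" "z k = y" "\<forall>i\<le>k. z i \<in> K" "\<forall>i<k. norm (z (Suc i) - z i) < e" for z k
  proof (rule ccontr)
    assume "\<not> T < (\<Sum>i<k. norm (z (Suc i) - z i))"
    then have "(\<Sum>i<k. norm (z (Suc i) - z i)) \<le> T" by simp
    then show False using ne that by blast
  qed
  define chains where "chains w = {(\<Sum>i<k. norm (z (Suc i) - z i)) | z k. z 0 = x \<and> z k = w \<and>
      (\<forall>i\<le>k. z i \<in> K) \<and> (\<forall>i<k. norm (z (Suc i) - z i) < e)}" for w
  define g where "g w = Inf (insert T (chains w))" for w
  have chains_nonneg: "0 \<le> u" if "u \<in> chains w" for u w
    using that unfolding chains_def by (auto intro: sum_nonneg)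
  have bddb: "bdd_below (insert T (chains w))" for w
    by (rule bdd_belowI[of _ 0]) (use T0 chains_nonneg in auto)
  have g_le: "g w \<le> T" for w unfolding g_def by (rule cInf_lower[OF insertI1 bddb])
  have g_ge: "0 \<le> g w" for w unfolding g_def
    by (rule cInf_greatest) (use T0 chains_nonneg in auto)
  have g_low: "g w \<le> u" if "u \<in> chains w" for u w
    unfolding g_def using that by (intro cInf_lower bddb) auto
  have gx: "g x = 0"
  proof -
    have mem: "(\<Sum>i<0::nat. norm ((\<lambda>_. x) (Suc i) - (\<lambda>_. x) i)) \<in> chains x"
      unfolding chains_def using xK by (intro CollectI exI[of _ "\<lambda>_. x"] exI[of _ 0]) auto
    have "g x \<le> 0" using g_low[OF mem] by simp
    then show ?thesis using g_ge[of x] by simp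
  qed
  have gy: "g y = T"
  proof -
    have "T \<le> g y" unfolding g_def
    proof (rule cInf_greatest)
      show "insert T (chains y) \<noteq> {}" by simp
      fix u assume "u \<in> insert T (chains y)"
      then show "T \<le> u"
      proof
        assume "u \<in> chains y"
        then obtain z :: "nat \<Rightarrow> 'a" and k where "u = (\<Sum>i<k. norm (z (Suc i) - z i))" "z 0 = x" "z k = y"
          "\<forall>i\<le>k. z i \<in> K" "\<forall>i<k. norm (z (Suc i) - z i) < e"
          unfolding chains_def by blast
        then show "T \<le> u" using long[of z k] by simp
      qed simp
    qed
    then show ?thesis using g_le[of y] by simp
  qed
  have glip1: "g w' \<le> g w + norm (w - w')" if wK: "w \<in> K" "w' \<in> K" and ww: "norm (w - w') < e" for w w'
  proof -
    have "g w' - norm (w - w') \<le> g w" unfolding g_def[of w]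
    proof (rule cInf_greatest)
      show "insert T (chains w) \<noteq> {}" by simp
      fix u assume "u \<in> insert T (chains w)"
      then show "g w' - norm (w - w') \<le> u"
      proof
        assume "u = T" then show ?thesis using g_le[of w'] norm_ge_zero[of "w - w'"] by linarith
      next
        assume "u \<in> chains w"
        then obtain z :: "nat \<Rightarrow> 'a" and k where u: "u = (\<Sum>i<k. norm (z (Suc i) - z i))" and
          z: "z 0 = x" "z k = w" "\<forall>i\<le>k. z i \<in> K" "\<forall>i<k. norm (z (Suc i) - z i) < e"
          unfolding chains_def by blast
        define z' where "z' i = (if i \<le> k then z i else w')" for i
        have s: "(\<Sum>i<Suc k. norm (z' (Suc i) - z' i)) = u + norm (w - w')"
        proof -
          have "(\<Sum>i<k. norm (z' (Suc i) - z' i)) = u"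
            unfolding u by (rule sum.cong) (auto simp: z'_def)
          moreover have "norm (z' (Suc k) - z' k) = norm (w - w')"
            using z(2) by (simp add: z'_def norm_minus_commute)
          ultimately show ?thesis by simp
        qed
        have mem: "(\<Sum>i<Suc k. norm (z' (Suc i) - z' i)) \<in> chains w'"
          unfolding chains_def
        proof (intro CollectI exI[of _ z'] exI[of _ "Suc k"] conjI)
          show "z' 0 = x" using z(1) by (simp add: z'_def)
          show "z' (Suc k) = w'" by (simp add: z'_def)
          show "\<forall>i\<le>Suc k. z' i \<in> K" using z(3) wK by (auto simp: z'_def)
          show "\<forall>i<Suc k. norm (z' (Suc i) - z' i) < e"
          proof (intro allI impI)
            fix i assume "i < Suc k"
            then consider "i < k" | "i = k" by linarith
            then show "norm (z' (Suc i) - z' i) < e"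
            proof cases
              case 1 then show ?thesis using z(4) by (simp add: z'_def)
            next
              case 2 then show ?thesis using z(2) ww by (simp add: z'_def norm_minus_commute)
            qed
          qed
        qed simp
        have "g w' \<le> u + norm (w - w')" using g_low[OF mem] s by simp
        then show ?thesis by simp
      qed
    qed
    then show ?thesis by simp
  qed
  have glip: "\<bar>g w - g w'\<bar> \<le> norm (w - w')" if "w \<in> K" "w' \<in> K" "norm (w - w') < e" for w w'
    using glip1[OF that] glip1[of w' w] that by (simp add: norm_minus_commute abs_le_iff)
  define r where "r = min (e / (4 * d)) (T / (8 * d))"
  have r0: "r > 0" unfolding r_def using e0 T0 d1 by simp
  have dr1: "2 * d * r \<le> e / 2"
  proof -
    have "r \<le> e / (4 * d)" unfolding r_def by simp
    then have "2 * d * r \<le> 2 * d * (e / (4 * d))" using d1 by (intro mult_left_mono) auto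
    also have "\<dots> = e / 2" using d1 by (simp add: field_simps)
    finally show ?thesis .
  qed
  have dr2: "2 * d * r \<le> T / 4"
  proof -
    have "r \<le> T / (8 * d)" unfolding r_def by simp
    then have "2 * d * r \<le> 2 * d * (T / (8 * d))" using d1 by (intro mult_left_mono) auto
    also have "\<dots> = T / 4" using d1 by (simp add: field_simps)
    finally show ?thesis .
  qed
  have re: "2 * real DIM('a) * r < e" using dr1 e0 unfolding d_def by simp
  obtain f df where C1f: "is_C1_deriv K f df" and fg: "\<And>z. z \<in> K \<Longrightarrow> \<bar>f z - g z\<bar> \<le> 2 * d * r"
    and dfb: "\<And>z. z \<in> K \<Longrightarrow> norm (df z) \<le> B"
    using smooth_approx[OF assms(1) Kne r0 re glip] unfolding d_def B_def by blast
  have fC1: "f \<in> C1 K" unfolding C1_def using C1f by blast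
  have sup1: "(SUP z\<in>K. \<bar>f z\<bar>) \<le> T + 2 * d * r"
  proof (rule cSUP_least[OF Kne])
    fix z assume "z \<in> K"
    then show "\<bar>f z\<bar> \<le> T + 2 * d * r" using fg[of z] g_le[of z] g_ge[of z] by linarith
  qed
  have bdd_df: "bdd_above ((\<lambda>z. norm (df' z)) ` K)" if "is_C1_deriv K f df'" for df'
  proof -
    have "continuous_on K (\<lambda>z. norm (df' z))"
      using that unfolding is_C1_deriv_def by (intro continuous_on_norm) blast
    then have "compact ((\<lambda>z. norm (df' z)) ` K)" by (rule compact_continuous_image[OF _ assms(1)])
    then show ?thesis by (intro bounded_imp_bdd_above compact_imp_bounded)
  qed
  have inf1: "(INF df'\<in>{df'. is_C1_deriv K f df'}. (SUP z\<in>K. norm (df' z))) \<le> B"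
  proof -
    have "(INF df'\<in>{df'. is_C1_deriv K f df'}. (SUP z\<in>K. norm (df' z))) \<le> (SUP z\<in>K. norm (df z))"
    proof (rule cINF_lower)
      show "df \<in> {df'. is_C1_deriv K f df'}" using C1f by simp
      show "bdd_below ((\<lambda>df'. SUP z\<in>K. norm (df' z)) ` {df'. is_C1_deriv K f df'})"
      proof (rule bdd_belowI[of _ 0])
        fix u assume "u \<in> (\<lambda>df'. SUP z\<in>K. norm (df' z)) ` {df'. is_C1_deriv K f df'}"
        then obtain df' where df': "is_C1_deriv K f df'" "u = (SUP z\<in>K. norm (df' z))" by blast
        have "0 \<le> norm (df' x)" by simp
        also have "\<dots> \<le> (SUP z\<in>K. norm (df' z))" by (rule cSUP_upper[OF xK bdd_df[OF df'(1)]])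
        finally show "0 \<le> u" using df'(2) by simp
      qed
    qed
    also have "\<dots> \<le> B" by (rule cSUP_least[OF Kne]) (rule dfb)
    finally show ?thesis .
  qed
  have normb: "C1_norm K f \<le> T + 2 * d * r + B"
    unfolding C1_norm_def using sup1 inf1 by linarith
  have key: "\<bar>f y - f x\<bar> / norm (y - x) \<le> C0 * C1_norm K f"
    using hyp[OF fC1] yK yx by blast
  have lower: "T / 2 \<le> \<bar>f y - f x\<bar>"
    using fg[OF yK] fg[OF xK] gx gy dr2 by linarith
  have nyx: "norm (y - x) = \<rho>" unfolding \<rho>_def by (simp add: norm_minus_commute)
  have "T / 2 \<le> C0 * C1_norm K f * \<rho>"
    using key lower rho0 unfolding nyx by (simp add: field_simps)
  also have "\<dots> \<le> C0 * (T + 2 * d * r + B) * \<rho>"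
    using normb C0 rho0 by (intro mult_right_mono mult_left_mono) auto
  also have "\<dots> \<le> C0 * (2 + B) * \<rho>"
  proof -
    have "T + 2 * d * r + B \<le> 2 + B" using dr2 rho1 unfolding T_def by linarith
    then show ?thesis using C0 rho0 by (intro mult_right_mono mult_left_mono) auto
  qed
  finally have "A * \<rho> / 2 \<le> C0 * (2 + B) * \<rho>" unfolding T_def .
  then have "(A / 2) * \<rho> \<le> (C0 * (2 + B)) * \<rho>" by simp
  then have "A / 2 \<le> C0 * (2 + B)" using rho0 by (rule mult_right_le_imp_le)
  then show False unfolding A_def by simp
qed

end
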